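(* Let $b>0$, and let $\psi$ be the function defined in the context, with $\psi^{(k)}$ its $k$-th derivative. For every $k\in\mathbb{N}\cup\{0\}$ there exists a unique solution on $(c,\infty)$ of the equation $(x-c)\psi^{(k+1)}(x)-\psi^{(k)}(x)=0$. In particular, there exists a unique $x_0>c$ solving $(x-c)\psi'(x)-\psi(x)=0$ and a unique $x_\infty>c$ solving $(x-c)\psi''(x)-\psi'(x)=0$.
   Context: Constants: $a\in\mathbb{R}$, $b>0$, $\sigma>0$, $\rho>0$, $c>0$. For $\beta<0$, let $D_\beta(x)=\frac{e^{-x^2/4}}{\Gamma(-\beta)}\int_0^\infty t^{-\beta-1}e^{-t^2/2-xt}\,dt$ be the parabolic cylinder function of order $\beta$, and define $$\psi(x)=e^{\frac{(bx-a)^2}{2\sigma^2 b}}D_{-\rho/b}\Big(-\frac{bx-a}{\sigma b}\sqrt{2b}\Big),\qquad x\in\mathbb{R},$$ which is the positive, strictly increasing fundamental solution of $\frac12\sigma^2u''+(a-bx)u'-\rho u=0$. *)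

theory Defs
  imports "HOL-Analysis.Analysis"
begin

text \<open>Parabolic cylinder function of order beta (intended for beta < 0), via its
  integral representation (Henstock-Kurzweil integral over (0,infinity)).\<close>
definition parabolic_D :: "real \<Rightarrow> real \<Rightarrow> real" where
  "parabolic_D \<beta> x =
     exp (- (x^2) / 4) / Gamma (- \<beta>) *
     integral {0<..} (\<lambda>t. t powr (- \<beta> - 1) * exp (- (t^2) / 2 - x * t))"

text \<open>The fundamental solution psi of (1/2) sigma^2 u'' + (a - b x) u' - rho u = 0.\<close>
definition psi_fun :: "real \<Rightarrow> real \<Rightarrow> real \<Rightarrow> real \<Rightarrow> real \<Rightarrow> real" where
  "psi_fun a b \<sigma> \<rho> x =
     exp ((b * x - a)^2 / (2 * \<sigma>^2 * b)) *
     parabolic_D (- \<rho> / b) (- ((b * x - a) / (\<sigma> * b)) * sqrt (2 * b))"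

end

theory Submission
  imports Defs
begin

lemma exp_taylor_bound:
  fixes u :: real
  shows "\<bar>exp u - 1 - u\<bar> \<le> u^2 * exp \<bar>u\<bar>"
proof (cases "u = 0")
  case True then show ?thesis by simp
next
  case False
  have der: "\<And>x. DERIV (\<lambda>v. exp v - 1 - v) x :> exp x - 1"
    by (auto intro!: derivative_eq_intros)
  show ?thesis
  proof (cases "u > 0")
    case True
    obtain z where z: "0 < z" "z < u" "exp u - 1 - u - (exp 0 - 1 - 0) = (u - 0) * (exp z - 1)"
      using MVT2[of 0 u "\<lambda>v. exp v - 1 - v" "\<lambda>x. exp x - 1"] True der by auto
    have e1: "exp z - 1 \<le> z * exp z"
    proof -
      have "1 - z \<le> exp (-z)" using exp_ge_add_one_self[of "-z"] by simp
      then have "(1 - z) * exp z \<le> exp (-z) * exp z" by (simp add: mult_right_mono)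
      then show ?thesis by (simp add: exp_minus field_simps)
    qed
    have "z * exp z \<le> u * exp u" using z by (intro mult_mono) auto
    moreover have "exp z - 1 \<ge> 0" using z by simp
    ultimately show ?thesis using z e1 True
      by (auto simp: power2_eq_square abs_of_nonneg intro!: mult_left_mono)
  next
    case neg: False
    then have u: "u < 0" using False by simp
    obtain z where z: "u < z" "z < 0" "exp 0 - 1 - 0 - (exp u - 1 - u) = (0 - u) * (exp z - 1)"
      using MVT2[of u 0 "\<lambda>v. exp v - 1 - v" "\<lambda>x. exp x - 1"] u der by auto
    have a: "\<bar>exp z - 1\<bar> \<le> -u"
    proof -
      have "exp z \<le> 1" using z by simp
      then have "\<bar>exp z - 1\<bar> = 1 - exp z" by simp
      moreover have "1 + z \<le> exp z" by (rule exp_ge_add_one_self)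
      ultimately show ?thesis using z by linarith
    qed
    have eq: "exp u - 1 - u = (-u) * (1 - exp z)" using z(3) by (simp add: algebra_simps)
    have "exp z \<le> 1" using z by simp
    then have "\<bar>exp u - 1 - u\<bar> = (-u) * \<bar>exp z - 1\<bar>" using u unfolding eq
      by (simp add: abs_mult)
    also have "\<dots> \<le> (-u) * (-u)" using a u by (intro mult_left_mono) auto
    also have "\<dots> \<le> u^2 * exp \<bar>u\<bar>"
    proof -
      have "1 \<le> exp \<bar>u\<bar>" by simp
      then have "u^2 * 1 \<le> u^2 * exp \<bar>u\<bar>" by (intro mult_left_mono) auto
      then show ?thesis by (simp add: power2_eq_square)
    qed
    finally show ?thesis .
  qed
qed

lemma integrable_J:
  fixes p s :: real
  assumes p: "p > -1"
  shows "(\<lambda>t. t powr p * exp (- (t^2)/2 + s*t)) integrable_on {0<..}"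
proof -
  define K where "K = exp ((s+1)^2/2)"
  have g0: "(\<lambda>t. t powr ((p+1) - 1) / exp t) integrable_on {0..}"
    using Gamma_integral_real[of "p+1"] p by (auto simp: has_integral_integrable)
  have g1: "(\<lambda>t. t powr ((p+1) - 1) / exp t) integrable_on {0<..}"
    by (rule integrable_spike_set[OF g0]) (auto intro: negligible_subset[of "{0}"])
  have g: "(\<lambda>t. K * (t powr p / exp t)) integrable_on {0<..}"
    using integrable_on_cmult_left[OF g1, of K] by simp
  show ?thesis
  proof (rule measurable_bounded_by_integrable_imp_integrable[OF _ g])
    show "(\<lambda>t. t powr p * exp (- (t^2)/2 + s*t)) \<in> borel_measurable (lebesgue_on {0<..})"
      by (rule continuous_imp_measurable_on_sets_lebesgue)
         (auto intro!: continuous_intros)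
    show "{0::real<..} \<in> sets lebesgue" by simp
    fix t :: real assume t: "t \<in> {0<..}"
    have "- (t^2)/2 + s*t \<le> (s+1)^2/2 + (- t)"
    proof -
      have "0 \<le> (t - (s+1))^2" by simp
      then show ?thesis by (simp add: power2_eq_square algebra_simps)
    qed
    then have "exp (- (t^2)/2 + s*t) \<le> K * exp (-t)"
      unfolding K_def by (simp flip: exp_add)
    then have "t powr p * exp (- (t^2)/2 + s*t) \<le> t powr p * (K * exp (-t))"
      by (intro mult_left_mono) auto
    then show "norm (t powr p * exp (- (t^2)/2 + s*t)) \<le> K * (t powr p / exp t)"
      using t by (simp add: exp_minus field_simps)
  qed
qed

lemma cmul_int:
  fixes f :: "real \<Rightarrow> real"
  assumes "f integrable_on S"
  shows "(\<lambda>x. c * f x) integrable_on S"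
  using integrable_on_cmult_left[OF assms, of c] by simp

definition Jf :: "real \<Rightarrow> real \<Rightarrow> real" where
  "Jf p s = integral {0<..} (\<lambda>t. t powr p * exp (- (t^2)/2 + s*t))"

lemma Jf_deriv:
  fixes p s :: real
  assumes p: "p > -1"
  shows "(Jf p has_real_derivative Jf (p+1) s) (at s)"
proof -
  define f where "f = (\<lambda>q y t::real. t powr q * exp (- (t^2)/2 + y*t))"
  have int: "\<And>q y. q > -1 \<Longrightarrow> f q y integrable_on {0<..}"
    unfolding f_def by (rule integrable_J)
  have Jf: "\<And>q y. Jf q y = integral {0<..} (f q y)" unfolding Jf_def f_def by simp
  define B where "B = Jf (p+2) (s+1)"
  have key: "\<bar>(Jf p y - Jf p s) / (y - s) - Jf (p+1) s\<bar> \<le> \<bar>y - s\<bar> * B"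
    if y: "0 < \<bar>y - s\<bar>" "\<bar>y - s\<bar> < 1" for y
  proof -
    define h where "h = y - s"
    have h0: "h \<noteq> 0" "\<bar>h\<bar> \<le> 1" using y by (auto simp: h_def)
    define comb where "comb = (\<lambda>t. f p y t - f p s t - h * f (p+1) s t)"
    have cint: "comb integrable_on {0<..}" unfolding comb_def
      using p by (intro integrable_diff cmul_int int) auto
    have eqJ: "Jf p y - Jf p s - h * Jf (p+1) s = integral {0<..} comb"
    proof -
      have i1: "f p y integrable_on {0<..}" "f p s integrable_on {0<..}"
        "(\<lambda>t. h * f (p+1) s t) integrable_on {0<..}"
        using p by (auto intro!: int cmul_int)
      have i2: "(\<lambda>t. f p y t - f p s t) integrable_on {0<..}"
        using integrable_diff[OF i1(1,2)] by simp
      show ?thesis unfolding comb_def Jf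
        using integral_diff[OF i2 i1(3)] integral_diff[OF i1(1,2)] by simp
    qed
    have pw: "norm (comb t) \<le> h^2 * f (p+2) (s+1) t" if t: "t \<in> {0<..}" for t
    proof -
      have t0: "t > 0" using t by simp
      have c: "comb t = f p s t * (exp (h*t) - 1 - h*t)"
      proof -
        have "exp (- (t^2)/2 + y*t) = exp (- (t^2)/2 + s*t) * exp (h*t)"
          by (simp add: h_def algebra_simps flip: exp_add)
        moreover have "t powr (p+1) = t powr p * t" using t0 by (simp add: powr_add)
        ultimately show ?thesis unfolding comb_def f_def by (simp add: algebra_simps)
      qed
      have fpos: "f p s t \<ge> 0" unfolding f_def by simp
      have "\<bar>exp (h*t) - 1 - h*t\<bar> \<le> (h*t)^2 * exp \<bar>h*t\<bar>" by (rule exp_taylor_bound)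
      also have "\<dots> \<le> (h*t)^2 * exp t"
        using h0 t0 by (intro mult_left_mono) (auto simp: abs_mult mult_le_cancel_right1)
      finally have e: "\<bar>exp (h*t) - 1 - h*t\<bar> \<le> (h*t)^2 * exp t" .
      have "norm (comb t) = f p s t * \<bar>exp (h*t) - 1 - h*t\<bar>"
        using fpos by (simp add: c abs_mult)
      also have "\<dots> \<le> f p s t * ((h*t)^2 * exp t)" using e fpos by (intro mult_left_mono)
      also have "\<dots> = h^2 * f (p+2) (s+1) t"
      proof -
        have "t powr (p+2) = t powr p * t^2" using t0 by (simp add: powr_add)
        moreover have "exp (- (t^2)/2 + (s+1)*t) = exp (- (t^2)/2 + s*t) * exp t"
          by (simp add: algebra_simps flip: exp_add)
        ultimately show ?thesis unfolding f_def by (simp add: power_mult_distrib)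
      qed
      finally show ?thesis .
    qed
    have bint: "(\<lambda>t. h^2 * f (p+2) (s+1) t) integrable_on {0<..}"
      using p by (intro cmul_int int) auto
    have "norm (integral {0<..} comb) \<le> integral {0<..} (\<lambda>t. h^2 * f (p+2) (s+1) t)"
      by (rule integral_norm_bound_integral[OF cint bint pw])
    also have "\<dots> = h^2 * B" unfolding B_def Jf by simp
    finally have n: "\<bar>Jf p y - Jf p s - h * Jf (p+1) s\<bar> \<le> h^2 * B" using eqJ by simp
    have "(Jf p y - Jf p s) / (y - s) - Jf (p+1) s = (Jf p y - Jf p s - h * Jf (p+1) s) / h"
      using h0 by (simp add: h_def field_simps)
    also have "\<bar>\<dots>\<bar> \<le> h^2 * B / \<bar>h\<bar>" using n h0 by (simp add: divide_right_mono)
    also have "\<dots> = \<bar>h\<bar> * B" using h0 by (simp add: power2_eq_square field_simps)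
    finally show ?thesis by (simp add: h_def)
  qed
  have "((\<lambda>y. (Jf p y - Jf p s) / (y - s) - Jf (p+1) s) \<longlongrightarrow> 0) (at s)"
  proof (rule Lim_null_comparison)
    show "\<forall>\<^sub>F y in at s. norm ((Jf p y - Jf p s) / (y - s) - Jf (p+1) s) \<le> \<bar>y - s\<bar> * B"
      unfolding eventually_at
      by (rule exI[of _ 1]) (auto simp: dist_real_def intro!: key)
    show "((\<lambda>y. \<bar>y - s\<bar> * B) \<longlongrightarrow> 0) (at s)"
      by (auto intro!: tendsto_eq_intros)
  qed
  then show ?thesis
    unfolding has_field_derivative_iff by (simp add: LIM_zero_iff)
qed

lemma Jf_pos:
  fixes p s :: real
  assumes p: "p > -1"
  shows "Jf p s > 0"
proof -
  define F where "F = (\<lambda>t::real. t powr p * exp (- (t^2)/2 + s*t))"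
  have cF: "continuous_on {1..2} F" unfolding F_def by (auto intro!: continuous_intros)
  obtain x0 where x0: "x0 \<in> {1..2}" "\<And>y. y \<in> {1..2} \<Longrightarrow> F x0 \<le> F y"
    using continuous_attains_inf[OF compact_Icc _ cF] by auto
  have d: "F x0 > 0" using x0 unfolding F_def by simp
  have "F x0 = integral {1..2::real} (\<lambda>_. F x0)" by simp
  also have "\<dots> \<le> integral {1..2} F"
    by (rule integral_le) (auto intro: x0 integrable_continuous_interval cF)
  also have "\<dots> \<le> integral {0<..} F"
  proof -
    have i1: "F integrable_on {1..2}" using cF by (rule integrable_continuous_interval)
    have i2: "F integrable_on {0<..}" unfolding F_def by (rule integrable_J[OF p])
    show ?thesis by (rule integral_subset_le[OF _ i1 i2]) (auto simp: F_def)
  qed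
  finally show ?thesis using d unfolding Jf_def F_def by simp
qed

lemma Jf_mono:
  fixes q s1 s2 :: real
  assumes q: "q > -1" and "s1 \<le> s2"
  shows "Jf q s1 \<le> Jf q s2"
  using assms(2)
  by (rule DERIV_nonneg_imp_nondecreasing)
     (use Jf_deriv[OF q] Jf_pos[of "q+1"] q in \<open>auto intro: less_imp_le\<close>)

lemma Jf_chain:
  fixes q \<kappa> d x :: real
  assumes q: "q > -1"
  shows "((\<lambda>x. Jf q (\<kappa>*x+d)) has_real_derivative \<kappa> * Jf (q+1) (\<kappa>*x+d)) (at x)"
proof -
  have "((\<lambda>x. Jf q (\<kappa>*x+d)) has_real_derivative Jf (q+1) (\<kappa>*x+d) * (\<kappa> * 1 + 0)) (at x)"
    by (rule DERIV_chain2[OF Jf_deriv[OF q]]) (auto intro!: derivative_eq_intros)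
  then show ?thesis by (simp add: mult.commute)
qed

lemma unique_root_g:
  fixes p \<kappa> d c :: real
  assumes p: "p > -1" and k: "\<kappa> > 0"
  defines "g \<equiv> (\<lambda>x. (x - c) * (\<kappa> * Jf (p+1) (\<kappa>*x+d)) - Jf p (\<kappa>*x+d))"
  shows "\<exists>!x. x > c \<and> g x = 0"
proof -
  have p1: "p + 1 > -1" "p + 1 + 1 > -1" using p by auto
  have gd: "(g has_real_derivative (x - c) * (\<kappa> * (\<kappa> * Jf (p+1+1) (\<kappa>*x+d)))) (at x)" for x
  proof -
    have d1: "((\<lambda>x. Jf p (\<kappa>*x+d)) has_real_derivative \<kappa> * Jf (p+1) (\<kappa>*x+d)) (at x)"
      by (rule Jf_chain[OF p])
    have d2: "((\<lambda>x. Jf (p+1) (\<kappa>*x+d)) has_real_derivative \<kappa> * Jf (p+1+1) (\<kappa>*x+d)) (at x)"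
      by (rule Jf_chain[OF p1(1)])
    have dl: "((\<lambda>x. x - c) has_real_derivative 1) (at x)" by (auto intro!: derivative_eq_intros)
    show ?thesis unfolding g_def
      by (rule DERIV_cong[OF DERIV_diff[OF DERIV_mult[OF dl DERIV_cmult[OF d2, of \<kappa>]] d1]])
         (simp add: algebra_simps)
  qed
  have gcont: "continuous_on A g" for A
    using gd by (meson DERIV_isCont continuous_at_imp_continuous_on)
  define L where "L = Jf (p+1+1) (\<kappa>*(c+1)+d)"
  have L: "L > 0" unfolding L_def by (rule Jf_pos[OF p1(2)])
  have kL: "\<kappa>*\<kappa>*L > 0" using k L by simp
  have lower: "g x \<ge> g (c+1) + (x - (c+1)) * (\<kappa>*\<kappa>*L)" if x: "x \<ge> c+1" for x
  proof -
    define h where "h = (\<lambda>x. g x - x * (\<kappa>*\<kappa>*L))"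
    have "h (c+1) \<le> h x"
    proof (rule DERIV_nonneg_imp_nondecreasing[OF x])
      fix y assume y: "c+1 \<le> y" "y \<le> x"
      have dh: "(h has_real_derivative (y - c) * (\<kappa> * (\<kappa> * Jf (p+1+1) (\<kappa>*y+d))) - 1 * (\<kappa>*\<kappa>*L)) (at y)"
      proof -
        have dx: "((\<lambda>x. x * (\<kappa>*\<kappa>*L)) has_real_derivative 1 * (\<kappa>*\<kappa>*L)) (at y)"
          by (auto intro!: derivative_eq_intros)
        show ?thesis unfolding h_def by (rule DERIV_diff[OF gd dx])
      qed
      have m: "L \<le> Jf (p+1+1) (\<kappa>*y+d)" unfolding L_def
        using y k by (intro Jf_mono p1) auto
      have "\<kappa>*\<kappa>*L \<le> \<kappa>*\<kappa>*Jf (p+1+1) (\<kappa>*y+d)" using m k by simp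
      also have "\<dots> \<le> (y - c) * (\<kappa>*\<kappa>*Jf (p+1+1) (\<kappa>*y+d))"
      proof -
        have "0 \<le> \<kappa>*\<kappa>*Jf (p+1+1) (\<kappa>*y+d)" using k L m by simp
        then have "1 * (\<kappa>*\<kappa>*Jf (p+1+1) (\<kappa>*y+d)) \<le> (y - c) * (\<kappa>*\<kappa>*Jf (p+1+1) (\<kappa>*y+d))"
          using y by (intro mult_right_mono) auto
        then show ?thesis by simp
      qed
      finally show "\<exists>d. (h has_real_derivative d) (at y) \<and> 0 \<le> d" using dh
        by (intro exI[of _ "(y - c) * (\<kappa> * (\<kappa> * Jf (p+1+1) (\<kappa>*y+d))) - 1 * (\<kappa>*\<kappa>*L)"])
           (simp add: mult.assoc)
    qed
    then show ?thesis unfolding h_def by (simp add: algebra_simps)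
  qed
  define X where "X = c + 1 + \<bar>g (c+1)\<bar> / (\<kappa>*\<kappa>*L) + 1"
  have "g X \<ge> g (c+1) + (X - (c+1)) * (\<kappa>*\<kappa>*L)" by (rule lower) (use kL in \<open>simp add: X_def\<close>)
  also have "(X - (c+1)) * (\<kappa>*\<kappa>*L) = \<bar>g (c+1)\<bar> + \<kappa>*\<kappa>*L"
    using kL L k by (simp add: X_def field_simps)
  finally have gX: "g X > 0" using kL by linarith
  have gc: "g c < 0" unfolding g_def using Jf_pos[OF p] by simp
  have cX: "c \<le> X" using kL by (simp add: X_def)
  obtain x where x: "c \<le> x" "x \<le> X" "g x = 0"
    using IVT'[of g c 0 X] gc gX cX gcont by auto
  have xc: "x > c" using x gc by (cases "x = c") auto
  have strict: "g x1 < g x2" if "c < x1" "x1 < x2" for x1 x2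
    by (rule DERIV_pos_imp_increasing[OF that(2)])
       (use that k Jf_pos[OF p1(2)] gd in \<open>auto intro!: exI mult_pos_pos\<close>)
  show ?thesis
  proof (rule ex1I[of _ x])
    show "x > c \<and> g x = 0" using xc x by simp
    fix y assume y: "y > c \<and> g y = 0"
    show "y = x"
    proof (rule linorder_cases[of y x])
      assume "y < x" then show ?thesis using strict[of y x] y x by simp
    next
      assume "x < y" then show ?thesis using strict[of x y] xc y x by simp
    qed
  qed
qed

lemma psi_eq:
  fixes a b \<sigma> \<rho> :: real
  assumes b: "b > 0" and s: "\<sigma> > 0"
  shows "psi_fun a b \<sigma> \<rho> = (\<lambda>x. (1 / Gamma (\<rho>/b)) *
     Jf (\<rho>/b - 1) ((sqrt (2*b) / \<sigma>) * x + (- a * sqrt (2*b) / (\<sigma>*b))))"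
proof
  fix x
  define z where "z = - ((b * x - a) / (\<sigma> * b)) * sqrt (2 * b)"
  have sq: "sqrt (2*b) ^ 2 = 2*b" using b by simp
  have z2: "z^2 = ((b * x - a) / (\<sigma> * b))^2 * (2*b)"
    unfolding z_def power_mult_distrib power2_minus sq ..
  have e: "exp ((b * x - a)^2 / (2 * \<sigma>^2 * b)) * exp (- (z^2) / 4) = 1"
  proof -
    have "(b * x - a)^2 / (2 * \<sigma>^2 * b) + (- (z^2) / 4) = 0"
      unfolding z2 using b s by (simp add: field_simps power2_eq_square)
    then show ?thesis by (simp flip: exp_add)
  qed
  have mz: "- z = (sqrt (2*b) / \<sigma>) * x + (- a * sqrt (2*b) / (\<sigma>*b))"
    unfolding z_def using b s by (simp add: field_simps)
  have integrand: "(\<lambda>t. t powr (- (- \<rho> / b) - 1) * exp (- (t^2) / 2 - z * t)) =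
     (\<lambda>t. t powr (\<rho>/b - 1) * exp (- (t^2)/2 + ((sqrt (2*b) / \<sigma>) * x + (- a * sqrt (2*b) / (\<sigma>*b))) * t))"
  proof
    fix t
    have "- (t^2) / 2 - z * t = - (t^2)/2 + (- z) * t" by simp
    then show "t powr (- (- \<rho> / b) - 1) * exp (- (t^2) / 2 - z * t) =
      t powr (\<rho>/b - 1) * exp (- (t^2)/2 + ((sqrt (2*b) / \<sigma>) * x + (- a * sqrt (2*b) / (\<sigma>*b))) * t)"
      unfolding mz by simp
  qed
  show "psi_fun a b \<sigma> \<rho> x = (1 / Gamma (\<rho>/b)) *
     Jf (\<rho>/b - 1) ((sqrt (2*b) / \<sigma>) * x + (- a * sqrt (2*b) / (\<sigma>*b)))"
    unfolding psi_fun_def parabolic_D_def Jf_def z_def[symmetric] integrand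
    using e by (simp add: field_simps)
qed

theorem lemma4p4:
  fixes a b \<sigma> \<rho> c :: real
  assumes "b > 0" and "\<sigma> > 0" and "\<rho> > 0" and "c > 0"
  defines "\<psi> \<equiv> psi_fun a b \<sigma> \<rho>"
  shows "(\<forall>k::nat. \<exists>!x. x > c \<and>
            (x - c) * (deriv ^^ (k + 1)) \<psi> x - (deriv ^^ k) \<psi> x = 0)
       \<and> (\<exists>!x0. x0 > c \<and> (x0 - c) * deriv \<psi> x0 - \<psi> x0 = 0)
       \<and> (\<exists>!xinf. xinf > c \<and> (xinf - c) * deriv (deriv \<psi>) xinf - deriv \<psi> xinf = 0)"
proof -
  note b = assms(1) and s = assms(2) and r = assms(3)
  define q where "q = \<rho>/b - 1"
  define \<kappa> where "\<kappa> = sqrt (2*b) / \<sigma>"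
  define d where "d = - a * sqrt (2*b) / (\<sigma>*b)"
  define C where "C = 1 / Gamma (\<rho>/b)"
  have q: "q > -1" unfolding q_def using b r by simp
  have k: "\<kappa> > 0" unfolding \<kappa>_def using b s by simp
  have C: "C > 0" unfolding C_def using b r by simp
  have psi: "\<psi> = (\<lambda>x. C * Jf q (\<kappa>*x+d))"
    unfolding \<psi>_def psi_eq[OF b s] q_def \<kappa>_def d_def C_def ..
  have derivs: "(deriv^^n) \<psi> = (\<lambda>x. C * \<kappa>^n * Jf (q + real n) (\<kappa>*x+d))" for n
  proof (induction n)
    case 0 then show ?case by (simp add: psi)
  next
    case (Suc n)
    show ?case
    proof
      fix x
      have qn: "q + real n > -1" using q by simp
      have "((\<lambda>x. C * \<kappa>^n * Jf (q + real n) (\<kappa>*x+d)) has_real_derivative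
              C * \<kappa>^n * (\<kappa> * Jf (q + real n + 1) (\<kappa>*x+d))) (at x)"
        by (rule DERIV_cmult[OF Jf_chain[OF qn]])
      then have "deriv (\<lambda>x. C * \<kappa>^n * Jf (q + real n) (\<kappa>*x+d)) x =
              C * \<kappa>^n * (\<kappa> * Jf (q + real n + 1) (\<kappa>*x+d))"
        by (rule DERIV_imp_deriv)
      then show "(deriv ^^ Suc n) \<psi> x = C * \<kappa> ^ Suc n * Jf (q + real (Suc n)) (\<kappa> * x + d)"
        using Suc.IH by (simp add: algebra_simps)
    qed
  qed
  have all: "\<exists>!x. x > c \<and> (x - c) * (deriv ^^ (k + 1)) \<psi> x - (deriv ^^ k) \<psi> x = 0" for k
  proof -
    have qk: "q + real k > -1" using q by simp
    define g where "g = (\<lambda>x. (x - c) * (\<kappa> * Jf (q + real k + 1) (\<kappa>*x+d)) - Jf (q + real k) (\<kappa>*x+d))"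
    have u: "\<exists>!x. x > c \<and> g x = 0" unfolding g_def by (rule unique_root_g[OF qk k])
    have eq: "(x - c) * (deriv ^^ (k + 1)) \<psi> x - (deriv ^^ k) \<psi> x = (C * \<kappa>^k) * g x" for x
      unfolding derivs g_def by (simp add: algebra_simps)
    have nz: "C * \<kappa>^k \<noteq> 0" using C k by simp
    show ?thesis unfolding eq using u nz k by simp
  qed
  have a0: "\<exists>!x0. x0 > c \<and> (x0 - c) * deriv \<psi> x0 - \<psi> x0 = 0"
    using all[of 0] by simp
  have a1: "\<exists>!xinf. xinf > c \<and> (xinf - c) * deriv (deriv \<psi>) xinf - deriv \<psi> xinf = 0"
    using all[of 1] by (simp add: numeral_2_eq_2)
  show ?thesis using all a0 a1 by blast
qed

end
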